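(* Let $f \in \mathcal{S}^1_{\mu,L}(\mathbb{R}^d)$ with $0<\mu\le L$, let $x^\star$ be its unique minimizer, let $r\ge 2$, $0<s<1/L$, and $K := \max\left\{0, \frac{3r^2 - 4r - 12}{8}\right\}$. Let $\{x_k\},\{y_k\}$ be generated by NAG from $x_0=y_0\in\mathbb{R}^d$, and for integers $k\ge 1$ define \[ \mathcal{E}(k) := s(k+1)(k+r+1)\big(f(x_{k+1}) - f(x^\star)\big) + \frac12\Big\|(k-1)(x_k - x_{k-1}) + r(x_k - x^\star) - s(k+r)\nabla f(y_k)\Big\|^2 . \] Then for every integer $k\ge \max\{1,K\}$, \[ \mathcal{E}(k+1) - \mathcal{E}(k) \le -\mu s\cdot\frac{1 - Ls}{4}\cdot \mathcal{E}(k+1). \]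
   Context: $\mathcal{S}^1_{\mu,L}(\mathbb{R}^d)$ denotes the class of continuously differentiable convex functions $f:\mathbb{R}^d\to\mathbb{R}$ whose gradient is $L$-Lipschitz and which are $\mu$-strongly convex, $f(y)\ge f(x)+\langle\nabla f(x),y-x\rangle+\frac{\mu}{2}\|y-x\|^2$ for all $x,y$. NAG with step size $s$ and momentum parameter $r$ is the iteration, for $k \ge 0$: $x_{k+1} = y_k - s\nabla f(y_k)$, $\; y_{k+1} = x_{k+1} + \frac{k}{k+r+1}(x_{k+1} - x_k)$. *)

theory Defs
  imports "HOL-Analysis.Analysis"
begin

definition S1 :: "real \<Rightarrow> real \<Rightarrow> ('a::euclidean_space \<Rightarrow> real) \<Rightarrow> ('a \<Rightarrow> 'a) \<Rightarrow> bool" where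
  "S1 mu L f grad \<longleftrightarrow>
     (\<forall>x. (f has_derivative (\<lambda>h. grad x \<bullet> h)) (at x)) \<and>
     continuous_on UNIV grad \<and>
     convex_on UNIV f \<and>
     (\<forall>x y. norm (grad x - grad y) \<le> L * norm (x - y)) \<and>
     (\<forall>x y. f y \<ge> f x + grad x \<bullet> (y - x) + mu / 2 * (norm (y - x))\<^sup>2)"

definition NAG :: "('a::euclidean_space \<Rightarrow> 'a) \<Rightarrow> real \<Rightarrow> real \<Rightarrow> (nat \<Rightarrow> 'a) \<Rightarrow> (nat \<Rightarrow> 'a) \<Rightarrow> bool" where
  "NAG grad s r x y \<longleftrightarrow> x 0 = y 0 \<and>
     (\<forall>k. x (Suc k) = y k - s *\<^sub>R grad (y k)) \<and>
     (\<forall>k. y (Suc k) = x (Suc k) + (real k / (real k + r + 1)) *\<^sub>R (x (Suc k) - x k))"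

text \<open>Lyapunov function E(k) (meaningful for k \<ge> 1).\<close>
definition lyapE :: "('a::euclidean_space \<Rightarrow> real) \<Rightarrow> ('a \<Rightarrow> 'a) \<Rightarrow> real \<Rightarrow> real \<Rightarrow> 'a \<Rightarrow> (nat \<Rightarrow> 'a) \<Rightarrow> (nat \<Rightarrow> 'a) \<Rightarrow> nat \<Rightarrow> real" where
  "lyapE f grad s r xs x y k =
     s * (real k + 1) * (real k + r + 1) * (f (x (Suc k)) - f xs)
     + 1/2 * (norm ((real k - 1) *\<^sub>R (x k - x (k - 1)) + r *\<^sub>R (x k - xs)
                    - (s * (real k + r)) *\<^sub>R grad (y k)))\<^sup>2"

end

theory Submission imports Defs begin
lemma descent:
  fixes f :: "'a::euclidean_space \<Rightarrow> real"
  assumes D: "\<forall>x. (f has_derivative (\<lambda>h. grad x \<bullet> h)) (at x)"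
    and Lip: "\<forall>x y. norm (grad x - grad y) \<le> L * norm (x - y)"
  shows "f z \<le> f y + grad y \<bullet> (z - y) + L/2 * (norm (z - y))^2"
proof -
  define d where "d = z - y"
  define h where "h t = f (y + t *\<^sub>R d) - t * (grad y \<bullet> d) - L/2 * t^2 * (norm d)^2" for t
  have dh: "(h has_real_derivative ((grad (y + t *\<^sub>R d) - grad y) \<bullet> d - L * t * (norm d)^2)) (at t)" for t
  proof -
    have 1: "((\<lambda>t. y + t *\<^sub>R d) has_derivative (\<lambda>h. h *\<^sub>R d)) (at t)"
      by (auto intro!: derivative_eq_intros)
    have 2: "((\<lambda>t. f (y + t *\<^sub>R d)) has_derivative (\<lambda>h. grad (y + t *\<^sub>R d) \<bullet> (h *\<^sub>R d))) (at t)"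
      using has_derivative_compose[OF 1 D[rule_format]] by simp
    have 3: "((\<lambda>t. f (y + t *\<^sub>R d)) has_real_derivative (grad (y + t *\<^sub>R d) \<bullet> d)) (at t)"
      using 2 by (simp add: has_real_derivative_iff_has_vector_derivative has_vector_derivative_def mult.commute)
    show ?thesis unfolding h_def
      by (auto intro!: derivative_eq_intros 3 simp: inner_diff_left algebra_simps power2_eq_square)
  qed
  have "h 1 \<le> h 0"
  proof (rule DERIV_nonpos_imp_nonincreasing[of 0 1 h])
    fix t :: real assume t: "0 \<le> t" "t \<le> 1"
    have "(grad (y + t *\<^sub>R d) - grad y) \<bullet> d \<le> norm (grad (y + t *\<^sub>R d) - grad y) * norm d"
      by (rule norm_cauchy_schwarz)
    also have "\<dots> \<le> L * norm (t *\<^sub>R d) * norm d"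
      using Lip[rule_format, of "y + t *\<^sub>R d" y] by (intro mult_right_mono) auto
    also have "\<dots> = L * t * (norm d)^2" using t by (simp add: power2_eq_square)
    finally show "\<exists>y. DERIV h t :> y \<and> y \<le> 0" using dh by fastforce
  qed simp
  thus ?thesis unfolding h_def d_def by simp
qed

lemma norm3:
  fixes a b c :: "'a::real_inner"
  shows "(norm (a + b + c))^2 \<le> 3 * ((norm a)^2 + (norm b)^2 + (norm c)^2)"
proof -
  have "0 \<le> (norm (a-b))^2 + (norm (b-c))^2 + (norm (a-c))^2" by simp
  thus ?thesis
    unfolding power2_norm_eq_inner
    by (simp add: inner_add_left inner_add_right inner_diff_left inner_diff_right inner_commute algebra_simps)
qed

lemma sq_expand:
  fixes v g :: "'a::real_inner"
  shows "(norm (v - a *\<^sub>R g))^2 = (norm v)^2 - 2 * a * (g \<bullet> v) + a^2 * (norm g)^2"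
  unfolding power2_norm_eq_inner
  by (simp add: inner_diff_left inner_diff_right inner_commute algebra_simps power2_eq_square)

lemma r1lem: "(mu::real) > 0 \<Longrightarrow> (mu * s * ((1 - L * s) / 4)) * (s * (m + 1) * (NN + 1) * (ng / (2 * mu))) = (s * (1-L * s)/8 * s * ((m+1) * (NN+1))) * ng"
  by (simp add: field_simps)
lemma r2lem: "(mu * s * ((1 - L * s) / 4)) * (1/2 * (3 * (m^2 * nw + r^2 * nu + (s * NN)^2 * ng))) = (3/2 * (mu * s * ((1 - L * s) / 4)) * m^2) * nw + (3/2 * (mu * s * ((1 - L * s) / 4)) * r^2) * nu + (3/8 * mu * s * (1-L * s) * (s * NN)^2) * (ng::real)"
  by (simp add: field_simps)

theorem mainTheorem5:
  fixes f :: "'a::euclidean_space \<Rightarrow> real" and grad :: "'a \<Rightarrow> 'a"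
    and mu L s r :: real and xs :: 'a and x y :: "nat \<Rightarrow> 'a" and k :: nat
  assumes "0 < mu" "mu \<le> L"
    and "S1 mu L f grad"
    and "\<forall>z. f xs \<le> f z"
    and "r \<ge> 2" "0 < s" "s < 1 / L"
    and "NAG grad s r x y"
    and "k \<ge> 1" "real k \<ge> max 0 ((3 * r\<^sup>2 - 4 * r - 12) / 8)"
  shows "lyapE f grad s r xs x y (Suc k) - lyapE f grad s r xs x y k
           \<le> - mu * s * ((1 - L * s) / 4) * lyapE f grad s r xs x y (Suc k)"
proof -
  note S = assms(3)[unfolded S1_def]
  have Dv: "\<forall>x. (f has_derivative (\<lambda>h. grad x \<bullet> h)) (at x)" using S by blast
  have Lip: "\<forall>x y. norm (grad x - grad y) \<le> L * norm (x - y)" using S by blast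
  have SC: "\<And>x y. f y \<ge> f x + grad x \<bullet> (y - x) + mu / 2 * (norm (y - x))\<^sup>2" using S by blast
  note N = assms(8)[unfolded NAG_def]
  have L0: "0 < L" using assms by linarith
  have t1: "L * s < 1" using assms(7) L0 by (simp add: field_simps)
  define a where "a = x (k - 1)"
  define b where "b = x k"
  define c1 where "c1 = x (Suc k)"
  define x2 where "x2 = x (Suc (Suc k))"
  define yk where "yk = y k"
  define y1 where "y1 = y (Suc k)"
  define g0 where "g0 = grad yk"
  define g where "g = grad y1"
  define w where "w = y1 - c1"
  define u where "u = y1 - xs"
  define m where "m = real k + 1"
  define NN where "NN = real k + r + 1"
  have c1e: "c1 = yk - s *\<^sub>R g0" using N unfolding c1_def yk_def g0_def by blast
  have x2e: "x2 = y1 - s *\<^sub>R g" using N unfolding x2_def y1_def g_def by blast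
  have y1e: "y1 = c1 + (real k / (real k + r + 1)) *\<^sub>R (c1 - b)" using N unfolding y1_def c1_def b_def by blast
  have yke: "yk = b + (real (k-1) / (real (k-1) + r + 1)) *\<^sub>R (b - a)"
  proof -
    obtain j where kj: "k = Suc j" using assms(9) by (cases k) auto
    have "y (Suc j) = x (Suc j) + (real j / (real j + r + 1)) *\<^sub>R (x (Suc j) - x j)" using N by blast
    thus ?thesis unfolding yk_def b_def a_def kj by simp
  qed
  have rk1: "real (k-1) = real k - 1" using assms(9) by simp
  have e1: "(real k + r) *\<^sub>R (yk - b) = (real k - 1) *\<^sub>R (b - a)"
  proof -
    have "real k + r \<noteq> 0" using assms(5) by simp
    thus ?thesis using yke rk1 by (simp add: scaleR_scaleR)
  qed
  have e2: "(real k + r + 1) *\<^sub>R (y1 - c1) = real k *\<^sub>R (c1 - b)"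
  proof -
    have "real k + r + 1 \<noteq> 0" using assms(5) by simp
    thus ?thesis using y1e by (simp add: scaleR_scaleR)
  qed
  have V: "m *\<^sub>R w + r *\<^sub>R u = real k *\<^sub>R (c1 - b) + r *\<^sub>R (c1 - xs)"
  proof -
    have "m *\<^sub>R w + r *\<^sub>R u = (real k + r + 1) *\<^sub>R (y1 - c1) + r *\<^sub>R (c1 - xs)"
      unfolding m_def w_def u_def by (simp add: algebra_simps)
    thus ?thesis using e2 by simp
  qed
  have V0: "(real k - 1) *\<^sub>R (x k - x (k - 1)) + r *\<^sub>R (x k - xs) - (s * (real k + r)) *\<^sub>R grad (y k)
      = m *\<^sub>R w + r *\<^sub>R u"
  proof -
    have "(real k - 1) *\<^sub>R (x k - x (k - 1)) + r *\<^sub>R (x k - xs) - (s * (real k + r)) *\<^sub>R grad (y k)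
       = (real k + r) *\<^sub>R (yk - b) + r *\<^sub>R (b - xs) - (s * (real k + r)) *\<^sub>R g0"
      using e1 unfolding a_def b_def g0_def yk_def by simp
    also have "\<dots> = real k *\<^sub>R (c1 - b) + r *\<^sub>R (c1 - xs)"
      unfolding c1e by (simp add: algebra_simps)
    finally show ?thesis using V by simp
  qed
  have V1: "(real (Suc k) - 1) *\<^sub>R (x (Suc k) - x (Suc k - 1)) + r *\<^sub>R (x (Suc k) - xs)
      - (s * (real (Suc k) + r)) *\<^sub>R grad (y (Suc k)) = (m *\<^sub>R w + r *\<^sub>R u) - (s * NN) *\<^sub>R g"
    unfolding V NN_def g_def y1_def c1_def b_def by (simp add: algebra_simps)
  define nw where "nw = (norm w)^2"
  define nu where "nu = (norm u)^2"
  define ng where "ng = (norm g)^2"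
  define gw where "gw = g \<bullet> w"
  define gu where "gu = g \<bullet> u"
  define Q0 where "Q0 = (norm (m *\<^sub>R w + r *\<^sub>R u))^2"
  define Q1 where "Q1 = (norm ((m *\<^sub>R w + r *\<^sub>R u) - (s * NN) *\<^sub>R g))^2"
  define Fk1 where "Fk1 = f c1"
  define Fy where "Fy = f y1"
  define F2 where "F2 = f x2"
  define fs where "fs = f xs"
  define E0 where "E0 = lyapE f grad s r xs x y k"
  define E1 where "E1 = lyapE f grad s r xs x y (Suc k)"
  have E0e: "E0 = s * m * NN * (Fk1 - fs) + 1/2 * Q0"
    unfolding E0_def lyapE_def V0 Q0_def m_def NN_def Fk1_def fs_def c1_def by simp
  have E1e: "E1 = s * (m + 1) * (NN + 1) * (F2 - fs) + 1/2 * Q1"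
    unfolding E1_def lyapE_def V1 Q1_def m_def NN_def F2_def fs_def x2_def
    by (simp add: algebra_simps)
  have Q1e: "Q1 = Q0 - 2 * (s * NN) * (m * gw + r * gu) + (s * NN)^2 * ng"
    unfolding Q1_def sq_expand Q0_def ng_def gw_def gu_def
    by (simp add: inner_add_right)
  have Q1b: "Q1 \<le> 3 * (m^2 * nw + r^2 * nu + (s * NN)^2 * ng)"
  proof -
    have "Q1 \<le> 3 * ((norm (m *\<^sub>R w))^2 + (norm (r *\<^sub>R u))^2 + (norm (- ((s * NN) *\<^sub>R g)))^2)"
      unfolding Q1_def using norm3[of "m *\<^sub>R w" "r *\<^sub>R u" "- ((s * NN) *\<^sub>R g)"] by simp
    thus ?thesis unfolding nw_def nu_def ng_def by (simp add: power_mult_distrib)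
  qed
  define c where "c = s * (1 - L * s / 2)"
  have hA: "F2 \<le> Fy - c * ng"
  proof -
    have "f x2 \<le> f y1 + grad y1 \<bullet> (x2 - y1) + L/2 * (norm (x2 - y1))^2"
      by (rule descent[OF Dv Lip])
    thus ?thesis unfolding F2_def Fy_def c_def ng_def x2e g_def
      using assms(6) by (simp add: power_mult_distrib dot_square_norm algebra_simps power2_eq_square)
  qed
  have hB: "Fk1 \<ge> Fy - gw + mu/2 * nw"
    using SC[of y1 c1] unfolding Fk1_def Fy_def gw_def nw_def g_def w_def
    by (simp add: inner_diff_right norm_minus_commute)
  have hC: "fs \<ge> Fy - gu + mu/2 * nu"
    using SC[of y1 xs] unfolding fs_def Fy_def gu_def nu_def g_def u_def
    by (simp add: inner_diff_right norm_minus_commute)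
  have hD: "gu \<le> mu/2 * nu + ng / (2 * mu)"
  proof -
    have "0 \<le> (norm (mu *\<^sub>R u - g))^2" by simp
    also have "\<dots> = mu^2 * nu - 2 * mu * gu + ng"
      unfolding power2_norm_eq_inner nu_def ng_def gu_def
      by (simp add: inner_diff_left inner_diff_right inner_commute algebra_simps power2_eq_square)
    finally have "2 * mu * gu \<le> mu^2 * nu + ng" by simp
    hence "gu \<le> (mu^2 * nu + ng) / (2 * mu)" using assms(1) by (simp add: field_simps)
    also have "\<dots> = mu/2 * nu + ng / (2 * mu)" using assms(1) by (simp add: field_simps power2_eq_square)
    finally show ?thesis .
  qed
  have hE: "F2 \<ge> fs" using assms(4) unfolding F2_def fs_def by simp
  have ng0: "ng \<ge> 0" "nw \<ge> 0" "nu \<ge> 0" unfolding ng_def nw_def nu_def by auto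
  have c0: "c \<ge> 0" using t1 assms(6) unfolding c_def by simp
  have NNm: "NN = m + r" unfolding NN_def m_def by simp
  define D where "D = NN * r - m - NN - 1"
  have D0: "D \<ge> 0"
  proof -
    have "(real k + r + 1) * r - (real k + 1) - (real k + r + 1) - 1 = real k * (r - 2) + (r * r - 3)"
      by (simp add: algebra_simps)
    moreover have "real k * (r - 2) \<ge> 0" using assms(5) by simp
    moreover have "r * r \<ge> 2 * r" using assms(5) by (simp add: mult_right_mono)
    ultimately show ?thesis unfolding D_def NN_def m_def using assms(5) by linarith
  qed
  have m0: "m > 0" "NN > 0" using assms(5) unfolding m_def NN_def by auto
  define T where "T = - (mu * s * NN * (m * nw + r * nu) / 2) - s * D * (F2 - fs) - (s^2 * NN^2 * (1 - L * s) / 2) * ng"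
  have step1: "E1 - E0 \<le> T"
  proof -
    have eq: "E1 - E0 = s * m * NN * (F2 - Fk1) + s * (m+NN+1) * (F2 - fs - gu) - s * D * gu - s * m * NN * gw + 1/2 * (s * NN)^2 * ng"
      unfolding E1e E0e Q1e D_def by (simp add: algebra_simps)
    have h1: "s * m * NN * (F2 - Fk1) \<le> s * m * NN * (gw - c * ng - mu/2 * nw)"
      using hA hB m0 assms(6) by (intro mult_left_mono) auto
    have h2: "s * (m+NN+1) * (F2 - fs - gu) \<le> s * (m+NN+1) * (- mu/2 * nu - c * ng)"
      using hA hC m0 assms(6) by (intro mult_left_mono) auto
    have h3: "s * D * (F2 - fs + c * ng + mu/2 * nu) \<le> s * D * gu"
      using hA hC D0 assms(6) by (intro mult_left_mono) auto
    have "E1 - E0 \<le> s * m * NN * (gw - c * ng - mu/2 * nw) + s * (m+NN+1) * (- mu/2 * nu - c * ng)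
        - s * D * (F2 - fs + c * ng + mu/2 * nu) - s * m * NN * gw + 1/2 * (s * NN)^2 * ng"
      using eq h1 h2 h3 by linarith
    also have "\<dots> = T"
      unfolding T_def c_def D_def NNm by (simp add: field_simps power2_eq_square)
    finally show ?thesis .
  qed
  define \<rho> where "\<rho> = mu * s * ((1 - L * s) / 4)"
  have rho0: "\<rho> \<ge> 0" unfolding \<rho>_def using assms(1,6) t1 by simp
  have hF: "F2 - fs \<le> ng / (2 * mu)"
  proof -
    have "c * ng \<ge> 0" using c0 ng0 by simp
    thus ?thesis using hA hC hD by linarith
  qed
  have P: "(m+1) * (NN+1) \<le> NN^2"
  proof -
    have "NN^2 = (m+1) * (NN+1) + D" unfolding D_def NN_def m_def by (simp add: algebra_simps power2_eq_square)
    thus ?thesis using D0 by linarith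
  qed
  have step2: "\<rho> * E1 \<le> - T"
  proof -
    have "\<rho> * E1 \<le> \<rho> * (s * (m + 1) * (NN + 1) * (ng / (2 * mu)) + 1/2 * (3 * (m^2 * nw + r^2 * nu + (s * NN)^2 * ng)))"
    proof -
      have "s * (m + 1) * (NN + 1) * (F2 - fs) \<le> s * (m + 1) * (NN + 1) * (ng / (2 * mu))"
        using hF m0 assms(6) by (intro mult_left_mono) auto
      thus ?thesis unfolding E1e using Q1b rho0 by (intro mult_left_mono) linarith+
    qed
    also have "\<dots> = (3/2 * \<rho>*m^2) * nw + (3/2 * \<rho>*r^2) * nu
        + (s * (1-L * s)/8 * s * ((m+1) * (NN+1)) + 3/8 * mu * s * (1-L * s) * (s * NN)^2) * ng"
    proof -
      have r1: "\<rho> * (s * (m + 1) * (NN + 1) * (ng / (2 * mu))) = (s * (1-L * s)/8 * s * ((m+1) * (NN+1))) * ng"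
        unfolding \<rho>_def using assms(1) by (rule r1lem)
      have r2: "\<rho> * (1/2 * (3 * (m^2 * nw + r^2 * nu + (s * NN)^2 * ng))) = (3/2 * \<rho> * m^2) * nw + (3/2 * \<rho> * r^2) * nu + (3/8 * mu * s * (1-L * s) * (s * NN)^2) * ng"
        unfolding \<rho>_def by (rule r2lem)
      have r3: "\<rho> * (s * (m + 1) * (NN + 1) * (ng / (2 * mu)) + 1/2 * (3 * (m^2 * nw + r^2 * nu + (s * NN)^2 * ng)))
         = \<rho> * (s * (m + 1) * (NN + 1) * (ng / (2 * mu))) + \<rho> * (1/2 * (3 * (m^2 * nw + r^2 * nu + (s * NN)^2 * ng)))"
        by (rule distrib_left)
      have r4: "(s * (1-L * s)/8 * s * ((m+1) * (NN+1)) + 3/8 * mu * s * (1-L * s) * (s * NN)^2) * ng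
         = (s * (1-L * s)/8 * s * ((m+1) * (NN+1))) * ng + (3/8 * mu * s * (1-L * s) * (s * NN)^2) * ng"
        by (rule distrib_right)
      show ?thesis using r1 r2 r3 r4 by linarith
    qed
    also have "\<dots> \<le> (mu * s * NN * m/2) * nw + (mu * s * NN * r/2) * nu + (s^2 * NN^2 * (1 - L * s) / 2) * ng"
    proof -
      have q: "0 \<le> 1 - L * s" "1 - L * s \<le> 1" using t1 L0 assms(6) by auto
      have a1: "3/2 * \<rho>*m^2 \<le> mu * s * NN * m/2"
      proof -
        have "3/2 * \<rho>*m^2 = (mu * s * m/2) * (3/4 * (1-L * s) * m)" unfolding \<rho>_def by (simp add: power2_eq_square)
        also have "\<dots> \<le> (mu * s * m/2) * NN"
        proof (rule mult_left_mono)
          have "(1 - L * s) * m \<le> 1 * m" by (rule mult_right_mono) (use q m0 assms(5) in auto)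
          thus "3/4 * (1-L * s) * m \<le> NN" using NNm assms(5) m0 by linarith
          show "0 \<le> mu * s * m / 2" using assms(1,5,6) m0 by simp
        qed
        finally show ?thesis by (simp add: mult_ac)
      qed
      have a2: "3/2 * \<rho>*r^2 \<le> mu * s * NN * r/2"
      proof -
        have "3/2 * \<rho>*r^2 = (mu * s * r/2) * (3/4 * (1-L * s) * r)" unfolding \<rho>_def by (simp add: power2_eq_square)
        also have "\<dots> \<le> (mu * s * r/2) * NN"
        proof (rule mult_left_mono)
          have "(1 - L * s) * r \<le> 1 * r" by (rule mult_right_mono) (use q m0 assms(5) in auto)
          thus "3/4 * (1-L * s) * r \<le> NN" using NNm assms(5) m0 by linarith
          show "0 \<le> mu * s * r / 2" using assms(1,5,6) m0 by simp
        qed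
        finally show ?thesis by (simp add: mult_ac)
      qed
      have a3: "s * (1-L * s)/8 * s * ((m+1) * (NN+1)) + 3/8 * mu * s * (1-L * s) * (s * NN)^2 \<le> s^2 * NN^2 * (1 - L * s) / 2"
      proof -
        have ms: "mu * s \<le> 1" using assms(2,6) t1 by (smt (verit) mult_right_mono)
        have "s * (1-L * s)/8 * s * ((m+1) * (NN+1)) + 3/8 * mu * s * (1-L * s) * (s * NN)^2
            = (s^2 * (1-L * s)) * ((m+1) * (NN+1)/8 + 3/8 * (mu * s) * NN^2)"
          by (simp add: algebra_simps power2_eq_square)
        also have "\<dots> \<le> (s^2 * (1-L * s)) * (NN^2/8 + 3/8 * 1 * NN^2)"
        proof (rule mult_left_mono)
          have z: "(mu * s) * NN^2 \<le> 1 * NN^2" by (rule mult_right_mono[OF ms]) simp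
          show "(m+1) * (NN+1)/8 + 3/8 * (mu * s) * NN^2 \<le> NN^2/8 + 3/8 * 1 * NN^2" using P z by linarith
          show "0 \<le> s^2 * (1-L * s)" using q by simp
        qed
        also have "\<dots> = s^2 * NN^2 * (1 - L * s) / 2" by (simp add: algebra_simps)
        finally show ?thesis .
      qed
      show ?thesis using a1 a2 a3 ng0
        by (intro add_mono mult_right_mono) auto
    qed
    also have "\<dots> \<le> - T"
    proof -
      have "s * D * (F2 - fs) \<ge> 0" using D0 hE assms(6) by simp
      thus ?thesis unfolding T_def by (simp add: algebra_simps add_divide_distrib)
    qed
    finally show ?thesis .
  qed
  have "- mu * s * ((1 - L * s) / 4) * E1 = - (\<rho> * E1)" unfolding \<rho>_def by simp
  thus ?thesis using step1 step2 unfolding E0_def[symmetric] E1_def[symmetric] by linarith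
qed
end
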